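(* For every prime power $q$ and every integer $h\geq 2$, there exists a $3$-fold blocking set of size $3(q^h+q^{h-1}+1)$ in $\mathrm{PG}(2,q^h)$.
   Context: A $3$-fold blocking set is a point set meeting every line in at least $3$ points. *)

theory Defs
  imports Main "HOL-Computational_Algebra.Primes"
begin

text \<open>The projective plane PG(2,F) over a field F: points are the 1-dimensional
subspaces of F^3 (represented as the set of nonzero multiples of a nonzero vector),
lines are the projective points annihilated by a nonzero linear form.\<close>

type_synonym 'a vec3 = "'a \<times> 'a \<times> 'a"

definition scale3 :: "'a::field \<Rightarrow> 'a vec3 \<Rightarrow> 'a vec3" where
  "scale3 c v = (c * fst v, c * fst (snd v), c * snd (snd v))"

definition dot3 :: "'a::field vec3 \<Rightarrow> 'a vec3 \<Rightarrow> 'a" where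
  "dot3 a v = fst a * fst v + fst (snd a) * fst (snd v) + snd (snd a) * snd (snd v)"

definition proj_point :: "'a::field vec3 \<Rightarrow> 'a vec3 set" where
  "proj_point v = {scale3 c v | c. c \<noteq> 0}"

definition pg_points :: "'a::field vec3 set set" where
  "pg_points = proj_point ` (UNIV - {(0,0,0)})"

definition pg_line :: "'a::field vec3 \<Rightarrow> 'a vec3 set set" where
  "pg_line a = {p \<in> pg_points. \<forall>v\<in>p. dot3 a v = 0}"

definition pg_lines :: "'a::field vec3 set set set" where
  "pg_lines = pg_line ` (UNIV - {(0,0,0)})"

definition multiple_blocking_set :: "nat \<Rightarrow> 'a::field vec3 set set \<Rightarrow> bool" where
  "multiple_blocking_set t B \<longleftrightarrow> B \<subseteq> pg_points \<and> (\<forall>L\<in>pg_lines. card (B \<inter> L) \<ge> t)"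

end

theory Submission
  imports Defs "HOL-Computational_Algebra.Polynomial"
begin

lemma scale3_1[simp]: "scale3 1 v = v"
  by (cases v) (auto simp: scale3_def)

lemma scale3_scale3: "scale3 a (scale3 b v) = scale3 (a*b) v"
  by (cases v) (auto simp: scale3_def mult.assoc)

lemma scale3_eq0: "scale3 c v = (0,0,0) \<longleftrightarrow> c = 0 \<or> v = (0,0,0)"
  by (cases v) (auto simp: scale3_def)

lemma dot3_scale3: "dot3 n (scale3 c v) = c * dot3 n v"
  by (cases v, cases n) (auto simp: scale3_def dot3_def algebra_simps)

lemma proj_point_self: "v \<in> proj_point v"
  unfolding proj_point_def by (rule CollectI, rule exI[of _ 1]) simp

lemma proj_point_scale:
  fixes v :: "'a::field vec3"
  assumes c: "c \<noteq> 0"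
  shows "proj_point (scale3 c v) = proj_point v"
  unfolding proj_point_def
proof (intro set_eqI iffI)
  fix w assume "w \<in> {scale3 d (scale3 c v) |d. d \<noteq> 0}"
  then obtain d where d: "d \<noteq> 0" "w = scale3 d (scale3 c v)" by auto
  hence "w = scale3 (d*c) v \<and> d*c \<noteq> 0" using c by (simp add: scale3_scale3)
  thus "w \<in> {scale3 d v |d. d \<noteq> 0}" by blast
next
  fix w assume "w \<in> {scale3 d v |d. d \<noteq> 0}"
  then obtain d where d: "d \<noteq> 0" "w = scale3 d v" by auto
  hence "w = scale3 (d/c) (scale3 c v) \<and> d/c \<noteq> 0" using c by (simp add: scale3_scale3)
  thus "w \<in> {scale3 d (scale3 c v) |d. d \<noteq> 0}" by blast
qed

lemma proj_point_eqD:
  assumes "proj_point u = proj_point v"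
  shows "\<exists>c. c \<noteq> 0 \<and> v = scale3 c u"
proof -
  have "v \<in> proj_point u" using assms proj_point_self by metis
  thus ?thesis unfolding proj_point_def by auto
qed

lemma proj_point_in_pg_points: "v \<noteq> (0,0,0) \<Longrightarrow> proj_point v \<in> pg_points"
  unfolding pg_points_def by auto

lemma pg_pointsE:
  assumes "P \<in> pg_points"
  obtains v where "v \<noteq> (0,0,0)" "P = proj_point v"
  using assms unfolding pg_points_def by auto

lemma proj_point_in_line:
  assumes "v \<noteq> (0,0,0)"
  shows "proj_point v \<in> pg_line n \<longleftrightarrow> dot3 n v = 0"
proof
  assume "proj_point v \<in> pg_line n"
  thus "dot3 n v = 0" unfolding pg_line_def using proj_point_self by blast
next
  assume h: "dot3 n v = 0"
  have "\<forall>w\<in>proj_point v. dot3 n w = 0"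
    unfolding proj_point_def using h by (auto simp: dot3_scale3)
  thus "proj_point v \<in> pg_line n"
    unfolding pg_line_def using proj_point_in_pg_points[OF assms] by auto
qed

definition gmap :: "'a::field \<Rightarrow> 'a \<Rightarrow> 'a vec3 \<Rightarrow> 'a vec3" where
  "gmap \<alpha> \<beta> v = (\<alpha> * snd (snd v), \<beta> * fst v, fst (snd v))"

lemma gmap_scale3: "gmap \<alpha> \<beta> (scale3 c v) = scale3 c (gmap \<alpha> \<beta> v)"
  by (cases v) (auto simp: gmap_def scale3_def algebra_simps)

lemma gmap_eq0: "\<alpha> \<noteq> 0 \<Longrightarrow> \<beta> \<noteq> 0 \<Longrightarrow> gmap \<alpha> \<beta> v = (0,0,0) \<longleftrightarrow> v = (0,0,0)"
  by (cases v) (auto simp: gmap_def)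

lemma gmap_inj: "\<alpha> \<noteq> 0 \<Longrightarrow> \<beta> \<noteq> 0 \<Longrightarrow> inj (gmap \<alpha> \<beta>)"
  by (rule injI) (auto simp: gmap_def prod_eq_iff)

lemma gmap3: "gmap \<alpha> \<beta> (gmap \<alpha> \<beta> (gmap \<alpha> \<beta> v)) = scale3 (\<alpha>*\<beta>) v"
  by (cases v) (auto simp: gmap_def scale3_def algebra_simps)

lemma gmap_proj_point: "gmap \<alpha> \<beta> ` proj_point v = proj_point (gmap \<alpha> \<beta> v)"
  unfolding proj_point_def by (auto simp flip: gmap_scale3 intro: image_eqI)

lemma dot3_gmap: "dot3 n (gmap \<alpha> \<beta> v) = dot3 (\<beta> * fst (snd n), snd (snd n), \<alpha> * fst n) v"
  by (cases v, cases n) (auto simp: gmap_def dot3_def algebra_simps)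

definition GS :: "'a::field \<Rightarrow> 'a \<Rightarrow> 'a vec3 set set \<Rightarrow> 'a vec3 set set" where
  "GS \<alpha> \<beta> S = (\<lambda>P. gmap \<alpha> \<beta> ` P) ` S"

definition blocks :: "'a::field vec3 set set \<Rightarrow> bool" where
  "blocks S \<longleftrightarrow> S \<subseteq> pg_points \<and> (\<forall>L\<in>pg_lines. S \<inter> L \<noteq> {})"

lemma blocks_GS:
  assumes "blocks S" "\<alpha> \<noteq> 0" "\<beta> \<noteq> 0"
  shows "blocks (GS \<alpha> \<beta> S)"
  unfolding blocks_def
proof safe
  fix P assume "P \<in> GS \<alpha> \<beta> S"
  then obtain Q where Q: "Q \<in> S" "P = gmap \<alpha> \<beta> ` Q" unfolding GS_def by auto
  have "Q \<in> pg_points" using Q assms(1) unfolding blocks_def by auto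
  then obtain v where v: "v \<noteq> (0,0,0)" "Q = proj_point v" by (rule pg_pointsE)
  show "P \<in> pg_points"
    using Q v by (simp add: gmap_proj_point proj_point_in_pg_points gmap_eq0 assms)
next
  fix L assume L: "L \<in> pg_lines" and e: "GS \<alpha> \<beta> S \<inter> L = {}"
  then obtain n where n: "n \<noteq> (0,0,0)" "L = pg_line n" unfolding pg_lines_def by auto
  define n' where "n' = (\<beta> * fst (snd n), snd (snd n), \<alpha> * fst n)"
  have "n' \<noteq> (0,0,0)" using n assms by (cases n) (auto simp: n'_def)
  hence "pg_line n' \<in> pg_lines" unfolding pg_lines_def by auto
  then obtain Q where Q: "Q \<in> S" "Q \<in> pg_line n'" using assms(1) unfolding blocks_def by auto
  have "Q \<in> pg_points" using Q assms(1) unfolding blocks_def by auto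
  then obtain v where v: "v \<noteq> (0,0,0)" "Q = proj_point v" by (rule pg_pointsE)
  have "dot3 n' v = 0" using Q v proj_point_in_line by blast
  hence "proj_point (gmap \<alpha> \<beta> v) \<in> pg_line n"
    by (subst proj_point_in_line) (auto simp: gmap_eq0 assms v dot3_gmap n'_def)
  moreover have "proj_point (gmap \<alpha> \<beta> v) \<in> GS \<alpha> \<beta> S"
    unfolding GS_def using Q v by (auto simp: gmap_proj_point[symmetric])
  ultimately show False using e n by auto
qed

lemma ff_power_card:
  fixes x :: "'a::{finite,field}"
  shows "x ^ card (UNIV :: 'a set) = x"
proof (cases "x = 0")
  case False
  have "x * (\<Prod>y\<in>UNIV-{0}. x * y) = x * x ^ (card (UNIV :: 'a set) - 1) * \<Prod>(UNIV-{0})"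
    by (simp add: prod.distrib mult_ac)
  also have "x * x ^ (card (UNIV :: 'a set) - 1) = x ^ Suc (card (UNIV :: 'a set) - 1)"
    by (subst power_Suc) auto
  also have "Suc (card (UNIV :: 'a set) - 1) = card (UNIV :: 'a set)"
    using finite_UNIV_card_ge_0[where ?'a = 'a] by simp
  also have "(\<Prod>y\<in>UNIV-{0}. x * y) = (\<Prod>y\<in>UNIV-{0}. y)"
    by (rule prod.reindex_bij_witness[of _ "\<lambda>y. y / x" "\<lambda>y. x * y"]) (use False in auto)
  finally show ?thesis
    by simp
qed (use finite_UNIV_card_ge_0[where ?'a = 'a] in auto)

lemma ff_of_nat_card:
  "of_nat (card (UNIV :: 'a::{finite,field} set)) = (0::'a)"
proof -
  have "(\<Sum>y\<in>UNIV. y + 1) = (\<Sum>y\<in>(UNIV::'a set). y)"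
    by (rule sum.reindex_bij_witness[of _ "\<lambda>y. y - 1" "\<lambda>y. y + 1"]) auto
  thus ?thesis by (simp add: sum.distrib)
qed

lemma ff_frob:
  fixes x y :: "'a::{finite,field}"
  assumes "prime p" "q = p ^ k" "card (UNIV :: 'a set) = q ^ h" "h > 0"
  shows "(x + y) ^ q = x ^ q + y ^ q"
proof -
  have "CHAR('a) > 0" by (rule finite_imp_CHAR_pos) simp
  hence pc: "prime CHAR('a)" by (rule prime_CHAR_semidom)
  have "CHAR('a) dvd card (UNIV :: 'a set)"
    using ff_of_nat_card[where 'a='a] of_nat_eq_0_iff_char_dvd by blast
  hence "CHAR('a) dvd p ^ (k*h)" using assms by (simp add: power_mult)
  hence "CHAR('a) dvd p" using pc prime_dvd_power by blast
  hence "CHAR('a) = p" using pc assms(1) primes_dvd_imp_eq by blast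
  thus ?thesis using freshmans_dream'[OF pc, of q k] assms by simp
qed

locale ffield =
  fixes q h :: nat and T :: "'a::{finite,field} \<Rightarrow> 'a"
  assumes q2: "q \<ge> 2" and h2: "h \<ge> 2"
    and card: "card (UNIV::'a set) = q^h"
    and frob: "\<And>x y::'a. (x+y)^q = x^q + y^q"
    and T_def: "\<And>x. T x = (\<Sum>i<h. x^(q^i))"
begin

definition Kset :: "'a set" where "Kset = {x. x^q = x}"

lemma frob0: "(0::'a)^q = 0" using q2 by simp

lemma frob_pow: "((x::'a)+y)^(q^i) = x^(q^i) + y^(q^i)"
proof (induction i)
  case (Suc i)
  have e: "(z::'a)^(q^Suc i) = (z^(q^i))^q" for z by (metis power_Suc2 power_mult)
  have "(x+y)^(q^Suc i) = ((x+y)^(q^i))^q" by (rule e)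
  also have "\<dots> = (x^(q^i))^q + (y^(q^i))^q" using Suc frob by simp
  finally show ?case by (metis e)
qed simp

lemma frob_sum: "(sum f A)^q = (\<Sum>i\<in>A. (f i :: 'a)^q)"
  by (induction A rule: infinite_finite_induct) (auto simp: frob0 frob)

lemma frob_neg: "(-(x::'a))^q = -(x^q)"
proof -
  have "(-x)^q + x^q = 0" using frob[of "-x" x] frob0 by simp
  thus ?thesis by (simp add: eq_neg_iff_add_eq_0)
qed

lemma T_add: "T (x + y) = T x + T y"
  by (simp add: T_def frob_pow sum.distrib)

lemma T_0: "T 0 = 0"
  using q2 by (simp add: T_def power_0_left)

lemma T_minus: "T (-x) = - T x"
  using T_add[of "-x" x] T_0 by (simp add: add_eq_0_iff)

lemma T_diff: "T (x - y) = T x - T y"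
  using T_add[of x "-y"] T_minus by simp

lemma xN: "(x::'a)^(q^h) = x"
  using ff_power_card[of x] card by simp

lemma T_K: "T x \<in> Kset"
proof -
  have "(T x)^q = (\<Sum>i<h. (x^(q^i))^q)" by (simp add: T_def frob_sum)
  also have "\<dots> = (\<Sum>i<h. x^(q^(Suc i)))" by (simp add: power_mult[symmetric] mult.commute)
  also have "\<dots> = T x"
  proof -
    have "(\<Sum>i<Suc h. x^(q^i)) = x^(q^0) + (\<Sum>i<h. x^(q^(Suc i)))"
      by (rule sum.lessThan_Suc_shift)
    moreover have "(\<Sum>i<Suc h. x^(q^i)) = (\<Sum>i<h. x^(q^i)) + x^(q^h)" by simp
    ultimately show ?thesis using xN by (simp add: T_def)
  qed
  finally show ?thesis by (simp add: Kset_def)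
qed

lemma K_0: "0 \<in> Kset" using frob0 by (simp add: Kset_def)
lemma K_1: "1 \<in> Kset" by (simp add: Kset_def)
lemma K_add: "a \<in> Kset \<Longrightarrow> b \<in> Kset \<Longrightarrow> a + b \<in> Kset" by (simp add: Kset_def frob)
lemma K_mult: "a \<in> Kset \<Longrightarrow> b \<in> Kset \<Longrightarrow> a * b \<in> Kset" by (simp add: Kset_def power_mult_distrib)
lemma K_neg: "a \<in> Kset \<Longrightarrow> - a \<in> Kset" by (simp add: Kset_def frob_neg)
lemma K_diff: "a \<in> Kset \<Longrightarrow> b \<in> Kset \<Longrightarrow> a - b \<in> Kset"
  using K_add K_neg by (metis diff_conv_add_uminus)
lemma K_inv: "a \<in> Kset \<Longrightarrow> inverse a \<in> Kset" by (simp add: Kset_def power_inverse)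
lemma K_div: "a \<in> Kset \<Longrightarrow> b \<in> Kset \<Longrightarrow> a / b \<in> Kset"
  using K_mult K_inv by (simp add: divide_inverse)

lemma K_pow: "a \<in> Kset \<Longrightarrow> a^(q^i) = a"
proof (induction i)
  case (Suc i)
  have "a^(q^Suc i) = (a^(q^i))^q" by (metis power_Suc2 power_mult)
  thus ?case using Suc by (simp add: Kset_def)
qed simp

lemma T_lin: "a \<in> Kset \<Longrightarrow> T (a * x) = a * T x"
  by (simp add: T_def power_mult_distrib K_pow sum_distrib_left)

lemma card_K: "card Kset \<le> q"
proof -
  define P :: "'a poly" where "P = monom 1 q - [:0,1:]"
  have "coeff P q = 1" using q2 by (simp add: P_def coeff_monom coeff_pCons split: nat.split)
  hence P0: "P \<noteq> 0" by auto
  have "degree P \<le> q" unfolding P_def using q2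
    by (intro degree_diff_le) (auto intro: degree_monom_le)
  have "Kset = {x. poly P x = 0}" by (auto simp: Kset_def P_def poly_monom)
  hence "card Kset \<le> degree P" using card_poly_roots_bound[OF P0] by simp
  thus ?thesis using \<open>degree P \<le> q\<close> by simp
qed

lemma card_fib: "card {y. T y = j} \<le> q^(h-1)"
proof -
  define P :: "'a poly" where "P = (\<Sum>i<h. monom 1 (q^i)) - [:j:]"
  have inj: "q^i = q^(h-1) \<longleftrightarrow> i = h-1" for i using q2 by (simp add: power_inject_exp)
  have pos: "q^(h-1) \<noteq> 0" using q2 by simp
  have c1: "coeff [:j:] (q^(h-1)) = 0" using pos by (cases "q^(h-1)") auto
  have "coeff (\<Sum>i<h. monom (1::'a) (q^i)) (q^(h-1)) = (\<Sum>i<h. if i = h-1 then 1 else 0)"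
  proof -
    have "(\<lambda>i. coeff (monom (1::'a) (q^i)) (q^(h-1))) = (\<lambda>i. if i = h-1 then 1 else 0)"
      by (rule ext) (simp only: coeff_monom inj)
    thus ?thesis by (simp only: coeff_sum)
  qed
  also have "\<dots> = 1" using h2 by simp
  finally have "coeff P (q^(h-1)) = 1" using c1 by (simp add: P_def)
  hence P0: "P \<noteq> 0" by auto
  have "degree P \<le> q^(h-1)" unfolding P_def
  proof (intro degree_diff_le degree_sum_le)
    fix i assume "i \<in> {..<h}"
    hence "q^i \<le> q^(h-1)" using q2 by (intro power_increasing) auto
    thus "degree (monom (1::'a) (q^i)) \<le> q^(h-1)" using degree_monom_le order_trans by blast
  qed auto
  have "{y. T y = j} = {x. poly P x = 0}" by (auto simp: T_def P_def poly_sum poly_monom)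
  hence "card {y. T y = j} \<le> degree P" using card_poly_roots_bound[OF P0] by simp
  thus ?thesis using \<open>degree P \<le> q^(h-1)\<close> by simp
qed

end

context ffield
begin

definition Dset :: "'a set" where "Dset = {T z / z | z. z \<noteq> 0}"

definition Rset :: "'a \<Rightarrow> 'a vec3 set set" where
  "Rset c = (\<lambda>x. proj_point (x, T x - c, 1)) ` UNIV \<union> (\<lambda>d. proj_point (1, d, 0)) ` Dset"

lemma dot3_simp: "dot3 (n1,n2,n3) (x,y,z) = n1*x + n2*y + n3*z"
  by (simp add: dot3_def)

lemma R_blocks: "blocks (Rset c)"
  unfolding blocks_def
proof safe
  fix P assume "P \<in> Rset c"
  thus "P \<in> pg_points" unfolding Rset_def by (auto intro!: proj_point_in_pg_points)
next
  fix L assume L: "L \<in> pg_lines" and e: "Rset c \<inter> L = {}"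
  then obtain n1 n2 n3 where n: "(n1,n2,n3) \<noteq> (0,0,0)" "L = pg_line (n1,n2,n3)"
    unfolding pg_lines_def by auto
  have aff: "proj_point (x, T x - c, 1) \<notin> pg_line (n1,n2,n3)" for x
    using e n unfolding Rset_def by auto
  have inf: "d \<in> Dset \<Longrightarrow> proj_point (1, d, 0) \<notin> pg_line (n1,n2,n3)" for d
    using e n unfolding Rset_def by auto
  have aff': "n1*x + n2*(T x - c) + n3 \<noteq> 0" for x
    using aff[of x] by (subst (asm) proj_point_in_line) (auto simp: dot3_simp)
  have inf': "d \<in> Dset \<Longrightarrow> n1 + n2*d \<noteq> 0" for d
    using inf[of d] by (subst (asm) proj_point_in_line) (auto simp: dot3_simp)
  have D1: "T 1 / 1 \<in> Dset" unfolding Dset_def by (intro CollectI exI[of _ 1]) simp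
  show False
  proof (cases "n2 = 0")
    case True
    show False
    proof (cases "n1 = 0")
      case True
      thus False using inf'[OF D1] \<open>n2 = 0\<close> by simp
    next
      case False
      hence "n1 * (-n3/n1) = -n3" by simp
      thus False using aff'[of "-n3/n1"] \<open>n2 = 0\<close> by simp
    qed
  next
    case False
    define m where "m = -n1/n2"
    have n2m: "n2 * m = -n1" using False by (simp add: m_def)
    show False
    proof (cases "m \<in> Dset")
      case True
      thus False using inf'[OF True] n2m by simp
    next
      case mD: False
      have "inj (\<lambda>x. T x - c - m*x)"
      proof (rule injI)
        fix x y assume "T x - c - m*x = T y - c - m*y"
        hence "T (x - y) = m * (x - y)" by (simp add: T_diff algebra_simps)
        show "x = y"
        proof (rule ccontr)
          assume "x \<noteq> y"
          hence "m = T (x - y) / (x - y)" using \<open>T (x - y) = m * (x - y)\<close> by simp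
          hence "m \<in> Dset" unfolding Dset_def using \<open>x \<noteq> y\<close> by auto
          thus False using mD by simp
        qed
      qed
      hence "surj (\<lambda>x. T x - c - m*x)" by (simp add: finite_UNIV_inj_surj)
      then obtain x where x: "-n3/n2 = T x - c - m*x" by (rule surjE)
      have "n2 * (T x - c - m*x) = n2*(T x - c) - (n2*m)*x" by (simp add: algebra_simps)
      hence "n1*x + n2*(T x - c) + n3 = n2 * (T x - c - m*x) + n3"
        using n2m by simp
      also have "\<dots> = 0" using x[symmetric] False by simp
      finally show False using aff' by blast
    qed
  qed
qed

lemma card_D: "card Dset \<le> q^(h-1) + 1"
proof -
  have "Dset \<subseteq> insert 0 (inverse ` {y. T y = 1})"
  proof
    fix d assume "d \<in> Dset"
    then obtain z where z: "z \<noteq> 0" "d = T z / z" unfolding Dset_def by auto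
    show "d \<in> insert 0 (inverse ` {y. T y = 1})"
    proof (cases "T z = 0")
      case True thus ?thesis using z by simp
    next
      case False
      have "T (inverse (T z) * z) = inverse (T z) * T z"
        by (rule T_lin) (simp add: K_inv T_K)
      hence "T (z / T z) = 1" using False by (simp add: field_simps)
      moreover have "d = inverse (z / T z)" using z by (simp add: field_simps)
      ultimately show ?thesis by blast
    qed
  qed
  hence "card Dset \<le> card (insert 0 (inverse ` {y. T y = 1}))" by (intro card_mono) auto
  also have "\<dots> \<le> Suc (card (inverse ` {y. T y = 1}))" by (rule card_insert_le_m1) auto
  also have "card (inverse ` {y. T y = 1}) \<le> card {y. T y = 1}" by (rule card_image_le) auto
  also have "\<dots> \<le> q^(h-1)" by (rule card_fib)
  finally show ?thesis by simp
qed

end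

lemma G3_point:
  assumes "\<alpha> \<noteq> 0" "\<beta> \<noteq> 0"
  shows "gmap \<alpha> \<beta> ` (gmap \<alpha> \<beta> ` (gmap \<alpha> \<beta> ` proj_point v)) = proj_point v"
  using assms by (simp add: gmap_proj_point gmap3 proj_point_scale)

lemma triple_disj:
  assumes A: "A \<subseteq> pg_points" and d: "A \<inter> GS \<alpha> \<beta> A = {}" and ab: "\<alpha> \<noteq> 0" "\<beta> \<noteq> 0"
  shows "A \<inter> GS \<alpha> \<beta> (GS \<alpha> \<beta> A) = {}" "GS \<alpha> \<beta> A \<inter> GS \<alpha> \<beta> (GS \<alpha> \<beta> A) = {}"
proof -
  show "A \<inter> GS \<alpha> \<beta> (GS \<alpha> \<beta> A) = {}"
  proof (rule ccontr)
    assume "A \<inter> GS \<alpha> \<beta> (GS \<alpha> \<beta> A) \<noteq> {}"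
    then obtain P Q where P: "P \<in> A" and Q: "Q \<in> A"
      and PQ: "P = gmap \<alpha> \<beta> ` (gmap \<alpha> \<beta> ` Q)" unfolding GS_def by auto
    have "Q \<in> pg_points" using Q A by auto
    then obtain v where v: "Q = proj_point v" by (rule pg_pointsE)
    have "gmap \<alpha> \<beta> ` P = Q" using PQ v G3_point[OF ab] by simp
    hence "Q \<in> GS \<alpha> \<beta> A" using P unfolding GS_def by auto
    thus False using Q d by auto
  qed
  show "GS \<alpha> \<beta> A \<inter> GS \<alpha> \<beta> (GS \<alpha> \<beta> A) = {}"
  proof (rule ccontr)
    assume "GS \<alpha> \<beta> A \<inter> GS \<alpha> \<beta> (GS \<alpha> \<beta> A) \<noteq> {}"
    then obtain Q1 Q2 where Q1: "Q1 \<in> A" and Q2: "Q2 \<in> A"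
      and e: "gmap \<alpha> \<beta> ` Q1 = gmap \<alpha> \<beta> ` (gmap \<alpha> \<beta> ` Q2)" unfolding GS_def by auto
    hence "Q1 = gmap \<alpha> \<beta> ` Q2" using gmap_inj[OF ab] by (simp add: inj_image_eq_iff)
    hence "Q1 \<in> GS \<alpha> \<beta> A" using Q2 unfolding GS_def by auto
    thus False using Q1 d by auto
  qed
qed

lemma card_pg_points:
  "card (UNIV::'a::{finite,field} set) * card (UNIV::'a set) + card (UNIV::'a set) + 1
     \<le> card (pg_points :: 'a vec3 set set)"
proof -
  define A1 where "A1 = (\<lambda>(a::'a,b::'a). proj_point (1::'a,a,b)) ` UNIV"
  define A2 where "A2 = (\<lambda>a::'a. proj_point (0::'a,1::'a,a)) ` UNIV"
  define A3 where "A3 = {proj_point (0::'a,0::'a,1::'a)}"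
  have i1: "inj (\<lambda>(a::'a,b::'a). proj_point (1::'a,a,b))"
  proof (rule injI, clarify)
    fix a b a' b' :: 'a assume "proj_point (1, a, b) = proj_point (1, a', b')"
    then obtain l where "l \<noteq> 0" "(1::'a, a', b') = scale3 l (1, a, b)" using proj_point_eqD by blast
    thus "a = a' \<and> b = b'" by (simp add: scale3_def)
  qed
  have i2: "inj (\<lambda>a::'a. proj_point (0::'a,1::'a,a))"
  proof (rule injI)
    fix a a' :: 'a assume "proj_point (0, 1, a) = proj_point (0, 1, a')"
    then obtain l where "l \<noteq> 0" "(0::'a, 1, a') = scale3 l (0, 1, a)" using proj_point_eqD by blast
    thus "a = a'" by (simp add: scale3_def)
  qed
  have d12: "A1 \<inter> A2 = {}"
  proof (rule ccontr)
    assume "A1 \<inter> A2 \<noteq> {}"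
    then obtain a b a' where "proj_point (1::'a, a, b) = proj_point (0, 1, a')"
      unfolding A1_def A2_def by auto
    then obtain l where "l \<noteq> 0" "(0::'a, 1, a') = scale3 l (1, a, b)" using proj_point_eqD by blast
    thus False by (simp add: scale3_def)
  qed
  have d3: "(A1 \<union> A2) \<inter> A3 = {}"
  proof (rule ccontr)
    assume "(A1 \<union> A2) \<inter> A3 \<noteq> {}"
    hence "proj_point (0::'a,0,1) \<in> A1 \<union> A2" unfolding A3_def by auto
    thus False
    proof
      assume "proj_point (0::'a,0,1) \<in> A1"
      then obtain a b where "proj_point (1::'a, a, b) = proj_point (0, 0, 1)" unfolding A1_def by auto
      then obtain l where "l \<noteq> 0" "(0::'a, 0, 1) = scale3 l (1, a, b)" using proj_point_eqD by blast
      thus False by (simp add: scale3_def)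
    next
      assume "proj_point (0::'a,0,1) \<in> A2"
      then obtain a where "proj_point (0::'a, 1, a) = proj_point (0, 0, 1)" unfolding A2_def by auto
      then obtain l where "l \<noteq> 0" "(0::'a, 0, 1) = scale3 l (0, 1, a)" using proj_point_eqD by blast
      thus False by (simp add: scale3_def)
    qed
  qed
  have "card (A1 \<union> A2 \<union> A3) = card A1 + card A2 + card A3"
    using d12 d3 by (simp add: card_Un_disjoint)
  also have "card A1 = card (UNIV :: 'a set) * card (UNIV :: 'a set)"
  proof -
    have "card A1 = card (UNIV :: ('a\<times>'a) set)" unfolding A1_def by (rule card_image[OF i1])
    also have "\<dots> = card (UNIV :: 'a set) * card (UNIV :: 'a set)"
      by (metis UNIV_Times_UNIV card_cartesian_product)
    finally show ?thesis .
  qed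
  also have "card A2 = card (UNIV :: 'a set)" unfolding A2_def using i2 by (simp add: card_image)
  also have "card A3 = 1" by (simp add: A3_def)
  finally have e: "card (A1 \<union> A2 \<union> A3) = card (UNIV::'a set) * card (UNIV::'a set) + card (UNIV::'a set) + 1" .
  have "A1 \<union> A2 \<union> A3 \<subseteq> pg_points"
    unfolding A1_def A2_def A3_def by (auto intro!: proj_point_in_pg_points)
  hence "card (A1 \<union> A2 \<union> A3) \<le> card (pg_points :: 'a vec3 set set)" by (intro card_mono) auto
  thus ?thesis using e by simp
qed

context ffield
begin

lemma card_R: "card (Rset c) \<le> q^h + (q^(h-1) + 1)"
proof -
  have "card (Rset c) \<le> card (range (\<lambda>x. proj_point (x, T x - c, 1))) + card ((\<lambda>d. proj_point (1::'a, d, 0::'a)) ` Dset)"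
    unfolding Rset_def by (rule card_Un_le)
  also have "card (range (\<lambda>x. proj_point (x, T x - c, 1))) \<le> card (UNIV :: 'a set)" by (rule card_image_le) simp
  also have "card ((\<lambda>d. proj_point (1::'a, d, 0::'a)) ` Dset) \<le> card Dset" by (rule card_image_le) simp
  finally show ?thesis using card_D card by simp
qed

lemma cT: "c \<notin> Kset \<Longrightarrow> T x - c \<noteq> 0"
  using T_K[of x] by auto

lemma R_disj:
  assumes c: "c \<notin> Kset" and \<beta>: "\<beta> \<noteq> 0" and \<alpha>: "\<alpha> \<noteq> 0"
    and t1: "T (1/\<beta>) \<noteq> 0" and t2: "T (c/\<beta>) = 0" and t3: "T (c*c/\<beta>) \<noteq> 0"
    and good: "\<And>k. k \<in> Kset \<Longrightarrow> k \<noteq> 0 \<Longrightarrow> T (\<alpha>/(k - c)) \<noteq> (k - T (c*c/\<beta>))/(k * T (1/\<beta>))"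
  shows "Rset c \<inter> GS \<alpha> \<beta> (Rset c) = {}"
proof (rule ccontr)
  assume "Rset c \<inter> GS \<alpha> \<beta> (Rset c) \<noteq> {}"
  then obtain P Q where P: "P \<in> Rset c" and Q: "Q \<in> Rset c" and PQ: "P = gmap \<alpha> \<beta> ` Q"
    unfolding GS_def by auto
  have c0: "c \<noteq> 0" using c K_0 by auto
  from P obtain u where u: "P = proj_point u"
    and ucase: "(\<exists>x. u = (x, T x - c, 1)) \<or> (\<exists>d\<in>Dset. u = (1,d,0))" unfolding Rset_def by auto
  from Q obtain w where w: "Q = proj_point w"
    and wcase: "(\<exists>x. w = (x, T x - c, 1)) \<or> (\<exists>d\<in>Dset. w = (1,d,0))" unfolding Rset_def by auto
  have "proj_point u = proj_point (gmap \<alpha> \<beta> w)" using PQ u w gmap_proj_point by simp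
  then obtain l where l: "l \<noteq> 0" "gmap \<alpha> \<beta> w = scale3 l u" using proj_point_eqD by blast
  show False
    using ucase
  proof
    assume "\<exists>x. u = (x, T x - c, 1)"
    then obtain x where ux: "u = (x, T x - c, 1)" by blast
    show False using wcase
    proof
      assume "\<exists>x. w = (x, T x - c, 1)"
      then obtain x' where wx: "w = (x', T x' - c, 1)" by blast
      from l(2) have e1: "\<alpha> = l * x" and e2: "\<beta> * x' = l * (T x - c)" and e3: "T x' - c = l"
        by (simp_all add: ux wx gmap_def scale3_def)
      define k where "k = T x'"
      define j where "j = T x"
      have kK: "k \<in> Kset" and jK: "j \<in> Kset" by (simp_all add: k_def j_def T_K)
      have "x' = (k - c) * (j - c) / \<beta>" using e2 e3 \<beta> by (simp add: k_def j_def field_simps)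
      also have "\<dots> = (k*j) * (1/\<beta>) - (k+j) * (c/\<beta>) + c*c/\<beta>" using \<beta> by (simp add: field_simps)
      finally have "k = T ((k*j) * (1/\<beta>) - (k+j) * (c/\<beta>) + c*c/\<beta>)" by (simp add: k_def)
      also have "\<dots> = (k*j) * T (1/\<beta>) - (k+j) * T (c/\<beta>) + T (c*c/\<beta>)"
      proof -
        have a: "T ((k*j) * (1/\<beta>)) = (k*j) * T (1/\<beta>)" by (rule T_lin) (rule K_mult[OF kK jK])
        have b: "T ((k+j) * (c/\<beta>)) = (k+j) * T (c/\<beta>)" by (rule T_lin) (rule K_add[OF kK jK])
        show ?thesis by (simp only: T_add T_diff a b)
      qed
      finally have kk: "k = k * j * T (1/\<beta>) + T (c*c/\<beta>)" using t2 by simp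
      have k0: "k \<noteq> 0" using kk t3 by auto
      have "j = (k - T (c*c/\<beta>)) / (k * T (1/\<beta>))" using kk k0 t1 by (simp add: field_simps)
      moreover have "x = \<alpha> / (k - c)" using e1 e3 l(1) by (simp add: k_def field_simps)
      ultimately have "T (\<alpha> / (k - c)) = (k - T (c*c/\<beta>)) / (k * T (1/\<beta>))" by (simp add: j_def)
      thus False using good[OF kK k0] by simp
    next
      assume "\<exists>d\<in>Dset. w = (1,d,0)"
      then obtain d' where d': "d' \<in> Dset" "w = (1,d',0)" by blast
      from l(2) have e1: "0 = l * x" and e2: "\<beta> = l * (T x - c)" and e3: "d' = l"
        by (simp_all add: ux d' gmap_def scale3_def)
      have x0: "x = 0" using e1 l(1) by simp
      hence eb: "\<beta> = - d' * c" using e2 e3 T_0 by simp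
      from d' obtain z where z: "z \<noteq> 0" "d' = T z / z" unfolding Dset_def by auto
      have "z = - (T z * (c / \<beta>))" using z eb \<beta> e3 l(1) c0 by (simp add: field_simps)
      hence "T z = T (- (T z * (c / \<beta>)))" by simp
      also have "\<dots> = - (T z * T (c/\<beta>))"
        using T_lin[OF T_K[of z], of "c/\<beta>"] by (simp only: T_minus)
      finally have "T z = 0" using t2 by simp
      hence "d' = 0" using z by simp
      thus False using e3 l(1) by simp
    qed
  next
    assume "\<exists>d\<in>Dset. u = (1,d,0)"
    then obtain d where ud: "u = (1,d,0)" by blast
    show False using wcase
    proof
      assume "\<exists>x. w = (x, T x - c, 1)"
      then obtain x' where wx: "w = (x', T x' - c, 1)" by blast
      from l(2) have "T x' - c = 0" by (simp add: ud wx gmap_def scale3_def)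
      thus False using cT[OF c] by blast
    next
      assume "\<exists>d\<in>Dset. w = (1,d,0)"
      then obtain d' where d': "w = (1,d',0)" by blast
      from l(2) have "0 = l" by (simp add: ud d' gmap_def scale3_def)
      thus False using l(1) by simp
    qed
  qed
qed

end

context ffield
begin

lemma qh: "q^h = q * q^(h-1)"
  using h2 by (cases h) auto

lemma exists_y: "\<exists>y. y \<noteq> 0 \<and> T y = 0"
proof -
  have "q^1 < q^h" using q2 h2 by (intro power_strict_increasing) auto
  hence lt: "card Kset < card (UNIV::'a set)" using card_K card by simp
  have "\<not> inj T"
  proof
    assume "inj T"
    hence "card (range T) = card (UNIV::'a set)" by (simp add: card_image)
    moreover have "card (range T) \<le> card Kset" by (rule card_mono) (auto simp: T_K)
    ultimately show False using lt by simp
  qed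
  then obtain x1 x2 where "x1 \<noteq> x2" "T x1 = T x2" unfolding inj_def by auto
  thus ?thesis by (intro exI[of _ "x1 - x2"]) (simp add: T_diff)
qed

lemma exists_z:
  assumes y: "y \<noteq> 0"
  shows "\<exists>z. T z \<noteq> 0 \<and> T (y*y/z) \<noteq> 0"
proof -
  define A where "A = {w::'a. T w = 0}"
  define B where "B = {w::'a. T (y*y/w) = 0}"
  have inv: "y*y/(y*y/w) = w" for w using y by (cases "w = 0") (simp_all add: field_simps)
  have "B \<subseteq> (\<lambda>v. y*y/v) ` A"
  proof
    fix w assume "w \<in> B"
    hence "y*y/w \<in> A" by (simp add: A_def B_def)
    thus "w \<in> (\<lambda>v. y*y/v) ` A" using inv[of w] by (metis image_eqI)
  qed
  hence "card B \<le> card ((\<lambda>v. y*y/v) ` A)" by (intro card_mono) auto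
  also have "\<dots> \<le> card A" by (rule card_image_le) simp
  finally have cB: "card B \<le> q^(h-1)" using card_fib[of 0] by (simp add: A_def)
  have cA: "card A \<le> q^(h-1)" using card_fib[of 0] by (simp add: A_def)
  have "0 \<in> A \<inter> B" by (simp add: A_def B_def T_0)
  hence "A \<inter> B \<noteq> {}" by blast
  hence "card (A \<inter> B) > 0" by (simp add: card_gt_0_iff)
  hence "card (A \<inter> B) \<ge> 1" by simp
  moreover have "card A + card B = card (A \<union> B) + card (A \<inter> B)" by (rule card_Un_Int) auto
  ultimately have "card (A \<union> B) + 1 \<le> 2 * q^(h-1)" using cA cB by linarith
  moreover have "q^h = q * q^(h-1)" by (rule qh)
  moreover have "2 * q^(h-1) \<le> q * q^(h-1)" using q2 by simp
  ultimately have "card (A \<union> B) < card (UNIV :: 'a set)" using card by linarith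
  hence "A \<union> B \<noteq> UNIV" by auto
  then obtain z where "z \<notin> A \<union> B" by auto
  thus ?thesis by (auto simp: A_def B_def)
qed

lemma exists_alpha:
  assumes c: "c \<notin> Kset"
  shows "\<exists>\<alpha>. \<alpha> \<noteq> 0 \<and> (\<forall>k. k \<in> Kset \<longrightarrow> k \<noteq> 0 \<longrightarrow> T (\<alpha>/(k - c)) \<noteq> F k)"
proof -
  define bad where "bad = (\<Union>k\<in>Kset - {0}. {a. T (a/(k - c)) = F k})"
  have each: "card {a. T (a/(k - c)) = F k} \<le> q^(h-1)" if k: "k \<in> Kset" for k
  proof -
    have kc: "k - c \<noteq> 0" using k c by auto
    have "{a. T (a/(k - c)) = F k} = (\<lambda>v. v * (k - c)) ` {v. T v = F k}"
    proof (intro set_eqI iffI)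
      fix a assume "a \<in> {a. T (a/(k - c)) = F k}"
      moreover have "a = (a/(k-c)) * (k - c)" using kc by simp
      ultimately show "a \<in> (\<lambda>v. v * (k - c)) ` {v. T v = F k}" by (metis (mono_tags) image_eqI mem_Collect_eq)
    next
      fix a assume "a \<in> (\<lambda>v. v * (k - c)) ` {v. T v = F k}"
      thus "a \<in> {a. T (a/(k - c)) = F k}" using kc by auto
    qed
    also have "card \<dots> \<le> card {v. T v = F k}" by (rule card_image_le) simp
    also have "\<dots> \<le> q^(h-1)" by (rule card_fib)
    finally show ?thesis .
  qed
  have "card bad \<le> (\<Sum>k\<in>Kset - {0}. card {a. T (a/(k - c)) = F k})"
    unfolding bad_def by (rule card_UN_le) simp
  also have "\<dots> \<le> (\<Sum>k\<in>Kset - {0}. q^(h-1))" by (rule sum_mono) (use each in auto)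
  also have "\<dots> = card (Kset - {0}) * q^(h-1)" by simp
  also have "card (Kset - {0}) = card Kset - 1" using K_0 by (simp add: card_Diff_singleton)
  finally have cb: "card bad \<le> (q - 1) * q^(h-1)"
    using card_K by (meson diff_le_mono mult_le_mono1 order_trans)
  have "card (insert 0 bad) \<le> Suc (card bad)" by (rule card_insert_le_m1) auto
  moreover have "q^h = q * q^(h-1)" by (rule qh)
  moreover have "q^(h-1) \<ge> 2"
  proof -
    have "q^1 \<le> q^(h-1)" using q2 h2 by (intro power_increasing) auto
    thus ?thesis using q2 by simp
  qed
  moreover have "q * q^(h-1) = (q - 1) * q^(h-1) + q^(h-1)" using q2
    by (cases q) auto
  ultimately have "card (insert 0 bad) < card (UNIV::'a set)" using cb card by linarith
  hence "insert 0 bad \<noteq> UNIV" by auto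
  then obtain \<alpha> where "\<alpha> \<notin> insert 0 bad" by auto
  thus ?thesis by (intro exI[of _ \<alpha>]) (auto simp: bad_def)
qed

end

context ffield
begin

theorem main: "\<exists>B :: 'a vec3 set set. multiple_blocking_set 3 B \<and> card B = 3 * (q^h + q^(h-1) + 1)"
proof -
  obtain y where y: "y \<noteq> 0" "T y = 0" using exists_y by blast
  obtain z where z: "T z \<noteq> 0" "T (y*y/z) \<noteq> 0" using exists_z[OF y(1)] by blast
  have z0: "z \<noteq> 0" using z T_0 by auto
  define c where "c = z / y"
  define \<beta> where "\<beta> = z / (y*y)"
  have \<beta>0: "\<beta> \<noteq> 0" using z0 y by (simp add: \<beta>_def)
  have e1: "1/\<beta> = y*y/z" by (simp add: \<beta>_def)
  have e2: "c/\<beta> = y" using z0 y by (simp add: c_def \<beta>_def field_simps)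
  have e3: "c*c/\<beta> = z" using z0 y by (simp add: c_def \<beta>_def field_simps)
  have cK: "c \<notin> Kset"
  proof
    assume "c \<in> Kset"
    hence "T (c * y) = c * T y" by (rule T_lin)
    moreover have "c * y = z" using y by (simp add: c_def)
    ultimately show False using y z by simp
  qed
  obtain \<alpha> where \<alpha>: "\<alpha> \<noteq> 0"
    "\<forall>k. k \<in> Kset \<longrightarrow> k \<noteq> 0 \<longrightarrow> T (\<alpha>/(k - c)) \<noteq> (k - T (c*c/\<beta>))/(k * T (1/\<beta>))"
    using exists_alpha[OF cK, of "\<lambda>k. (k - T (c*c/\<beta>))/(k * T (1/\<beta>))"] by blast
  define R where "R = Rset c"
  have d1: "R \<inter> GS \<alpha> \<beta> R = {}" unfolding R_def
    by (rule R_disj[OF cK \<beta>0 \<alpha>(1)]) (use e1 e2 e3 y z \<alpha>(2) in auto)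
  have b1: "blocks R" unfolding R_def by (rule R_blocks)
  hence Rp: "R \<subseteq> pg_points" unfolding blocks_def by auto
  define S2 where "S2 = GS \<alpha> \<beta> R"
  define S3 where "S3 = GS \<alpha> \<beta> S2"
  have d2: "R \<inter> S3 = {}" and d3: "S2 \<inter> S3 = {}"
    using triple_disj[OF Rp d1 \<alpha>(1) \<beta>0] by (simp_all add: S2_def S3_def)
  have d1': "R \<inter> S2 = {}" using d1 by (simp add: S2_def)
  have b2: "blocks S2" unfolding S2_def by (rule blocks_GS[OF b1 \<alpha>(1) \<beta>0])
  have b3: "blocks S3" unfolding S3_def by (rule blocks_GS[OF b2 \<alpha>(1) \<beta>0])
  define U where "U = R \<union> S2 \<union> S3"
  have Up: "U \<subseteq> pg_points" using b1 b2 b3 unfolding U_def blocks_def by auto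
  have U3: "card (U \<inter> L) \<ge> 3" if L: "L \<in> pg_lines" for L
  proof -
    obtain P1 where P1: "P1 \<in> R" "P1 \<in> L" using b1 L unfolding blocks_def by blast
    obtain P2 where P2: "P2 \<in> S2" "P2 \<in> L" using b2 L unfolding blocks_def by blast
    obtain P3 where P3: "P3 \<in> S3" "P3 \<in> L" using b3 L unfolding blocks_def by blast
    have "P1 \<noteq> P2" using P1 P2 d1' by auto
    moreover have "P1 \<noteq> P3" using P1 P3 d2 by auto
    moreover have "P2 \<noteq> P3" using P2 P3 d3 by auto
    ultimately have "card {P1, P2, P3} = 3" by simp
    moreover have "{P1, P2, P3} \<subseteq> U \<inter> L" using P1 P2 P3 by (auto simp: U_def)
    hence "card {P1, P2, P3} \<le> card (U \<inter> L)" by (intro card_mono) simp_all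
    ultimately show ?thesis by simp
  qed
  have cR: "card R \<le> q^h + (q^(h-1) + 1)" unfolding R_def by (rule card_R)
  have c2: "card S2 \<le> card R" unfolding S2_def GS_def by (rule card_image_le) simp
  have c3: "card S3 \<le> card S2" unfolding S3_def GS_def by (rule card_image_le) simp
  have "card U \<le> card R + card S2 + card S3"
    unfolding U_def by (meson card_Un_le add_le_mono order_trans le_refl)
  hence "card U \<le> 3 * card R" using c2 c3 by linarith
  moreover have "3 * card R \<le> 3 * (q^h + q^(h-1) + 1)" using cR by simp
  ultimately have cU: "card U \<le> 3 * (q^h + q^(h-1) + 1)" by (rule order_trans)
  define N where "N = 3 * (q^h + q^(h-1) + 1)"
  have cP: "N \<le> card (pg_points :: 'a vec3 set set)"
  proof -
    have r2: "q^(h-1) \<ge> 2"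
    proof -
      have "q^1 \<le> q^(h-1)" using q2 h2 by (intro power_increasing) auto
      thus ?thesis using q2 by simp
    qed
    have Qr: "q^h \<ge> 2 * q^(h-1)" using qh q2 by simp
    define Q where "Q = q^h"
    define r where "r = q^(h-1)"
    have Qr': "Q \<ge> 2 * r" and r2': "r \<ge> 2" using Qr r2 by (simp_all add: Q_def r_def)
    hence "Q \<ge> 4" by linarith
    hence QQ: "Q * Q \<ge> 4 * Q" by simp
    have "card (UNIV::'a set) * card (UNIV::'a set) + card (UNIV::'a set) + 1
       \<le> card (pg_points :: 'a vec3 set set)" by (rule card_pg_points)
    hence "Q * Q + Q + 1 \<le> card (pg_points :: 'a vec3 set set)" using card by (simp add: Q_def)
    moreover have "N = 3 * Q + 3 * r + 3" by (simp add: N_def Q_def r_def)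
    moreover obtain S where "S = Q * Q" by blast
    ultimately show ?thesis using QQ Qr' r2' by linarith
  qed
  have "card (pg_points - U) = card (pg_points :: 'a vec3 set set) - card U"
    using Up by (simp add: card_Diff_subset)
  hence "N - card U \<le> card (pg_points - U)" using cP by linarith
  then obtain W where W: "W \<subseteq> pg_points - U" "card W = N - card U" "finite W"
    by (rule obtain_subset_with_card_n)
  define B where "B = U \<union> W"
  have "card B = card U + card W" unfolding B_def using W by (intro card_Un_disjoint) auto
  hence cB: "card B = N" using W cU by (simp add: N_def)
  have "multiple_blocking_set 3 B"
    unfolding multiple_blocking_set_def
  proof
    show "B \<subseteq> pg_points" using Up W by (auto simp: B_def)
    show "\<forall>L\<in>pg_lines. 3 \<le> card (B \<inter> L)"
    proof
      fix L :: "'a vec3 set set" assume L: "L \<in> pg_lines"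
      have "card (U \<inter> L) \<le> card (B \<inter> L)" by (intro card_mono) (auto simp: B_def)
      thus "3 \<le> card (B \<inter> L)" using U3[OF L] by simp
    qed
  qed
  thus ?thesis using cB unfolding N_def by blast
qed

end

theorem corollary4p8:
  fixes q h :: nat
  assumes "\<exists>p k. prime p \<and> k > 0 \<and> q = p ^ k"
    and "h \<ge> 2"
    and "card (UNIV :: 'a set) = q ^ h"
  shows "\<exists>B :: ('a::{finite,field}) vec3 set set. multiple_blocking_set 3 B \<and>
           card B = 3 * (q ^ h + q ^ (h - 1) + 1)"
proof -
  obtain p k where pk: "prime p" "k > 0" "q = p ^ k" using assms(1) by blast
  have "p \<ge> 2" using pk(1) by (rule prime_ge_2_nat)
  moreover have "p \<le> p ^ k" using pk(2) \<open>p \<ge> 2\<close> by (simp add: self_le_power)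
  ultimately have q2: "q \<ge> 2" using pk(3) by simp
  interpret ffield q h "\<lambda>x::'a. \<Sum>i<h. x^(q^i)"
  proof
    show "2 \<le> q" by (rule q2)
    show "2 \<le> h" by (rule assms(2))
    show "card (UNIV::'a set) = q^h" by (rule assms(3))
    show "(x+y)^q = x^q + y^q" for x y :: 'a
      by (rule ff_frob[OF pk(1) pk(3) assms(3)]) (use assms(2) in simp)
  qed simp
  show ?thesis by (rule main)
qed


end
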